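(* Let $\mathcal{A}^{(1)},\dots,\mathcal{A}^{(k)}$ be mechanisms of the form $\mathcal{A}^{(i)}:\mathcal{S}^{(1)}\times\cdots\times\mathcal{S}^{(i-1)}\times\mathcal{D}\to\mathcal{S}^{(i)}$. Suppose there are constants $a>0$ and $b\in(0,1)$ such that each $\mathcal{A}^{(i)}$ is $\varepsilon_i$-DP with $\varepsilon_i\le\log\left(1+\frac{a}{k-b(i-1)}\right)$. Then for any $\delta\in(0,1)$, the $k$-fold adaptive composition of $\mathcal{A}^{(1)},\dots,\mathcal{A}^{(k)}$ is $(\varepsilon,\delta)$-DP with $$\varepsilon=\frac{a^2}{2k(1-b)}+\sqrt{\frac{2a^2\log(1/\delta)}{k(1-b)}}.$$
   Context: Differential privacy: two datasets $D,D'\in\mathcal{D}^n$ are neighboring if they differ in at most one coordinate. A randomized algorithm $\mathcal{A}:\mathcal{D}^n\to\mathcal{S}$ is $(\varepsilon,\delta)$-DP if for all neighboring $D,D'$ and all measurable $S\subseteq\mathcal{S}$, $\Pr[\mathcal{A}(D)\in S]\le e^{\varepsilon}\Pr[\mathcal{A}(D')\in S]+\delta$; $\varepsilon$-DP means $(\varepsilon,0)$-DP. A mechanism $\mathcal{A}^{(i)}$ that receives the outputs $s_{1:i-1}$ of previous mechanisms as auxiliary input is $\varepsilon_i$-DP if $\mathcal{A}^{(i)}(s_{1:i-1},\cdot)$ is $\varepsilon_i$-DP for every fixed $s_{1:i-1}$. The $k$-fold adaptive composition on input $D$ runs $s_i=\mathcal{A}^{(i)}(s_{1:i-1},D)$ for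 $i=1,\dots,k$ with independent internal randomness and outputs $s_{1:k}$. *)

theory Defs
  imports "HOL-Probability.Probability"
begin

definition neighboring :: "nat \<Rightarrow> 'd list \<Rightarrow> 'd list \<Rightarrow> bool" where
  "neighboring n D D' \<longleftrightarrow> length D = n \<and> length D' = n \<and>
     card {j. j < n \<and> D ! j \<noteq> D' ! j} \<le> 1"

definition dp :: "nat \<Rightarrow> 's measure \<Rightarrow> ('d list \<Rightarrow> 's measure) \<Rightarrow> real \<Rightarrow> real \<Rightarrow> bool" where
  "dp n M A eps delta \<longleftrightarrow>
     (\<forall>D D'. neighboring n D D' \<longrightarrow>
        (\<forall>X \<in> sets M. measure (A D) X \<le> exp eps * measure (A D') X + delta))"

text \<open>Mechanism number i (0-based) has output space S i and receives
  the previous outputs s_0..s_(i-1) as an (extensional) function on {..<i}, together with the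
  dataset; it returns a probability measure on S i.\<close>
fun adaptive_comp ::
  "(nat \<Rightarrow> 's measure) \<Rightarrow> (nat \<Rightarrow> (nat \<Rightarrow> 's) \<Rightarrow> 'd list \<Rightarrow> 's measure) \<Rightarrow> nat
     \<Rightarrow> 'd list \<Rightarrow> (nat \<Rightarrow> 's) measure" where
  "adaptive_comp S A 0 D = return (PiM {} S) (\<lambda>_. undefined)"
| "adaptive_comp S A (Suc i) D =
     bind (adaptive_comp S A i D) (\<lambda>s. distr (A i s D) (PiM {..<Suc i} S) (\<lambda>x. s(i := x)))"

end

theory Submission
  imports Defs
begin



lemma alg_id:
  fixes p q :: real assumes p: "p > 0" and q: "q > 1"
  shows "(p*q*(1 - 1/(q*q)) + 1/(p*q)*(q*q-1)) / (q*q - 1/(q*q)) = ((p + 1/p)/2) / ((q + 1/q)/2)"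
proof -
  have q0: "q > 0" using q by simp
  have n: "p*q*(1 - 1/(q*q)) + 1/(p*q)*(q*q-1) = (q*q-1)*(p*p+1)/(p*q)"
    using p q0 by (simp add: field_simps)
  have d: "q*q - 1/(q*q) = (q*q-1)*(q*q+1)/(q*q)"
    using q0 by (simp add: field_simps)
  have r: "((p + 1/p)/2) / ((q + 1/q)/2) = (p*p+1)*q/(p*(q*q+1))"
  proof -
    have a: "p + 1/p = (p*p+1)/p" using p by (simp add: field_simps)
    have b: "q + 1/q = (q*q+1)/q" using q0 by (simp add: field_simps)
    have "q*q+1 > 0" using q0 by (simp add: add_pos_pos)
    then show ?thesis unfolding a b using p q0 by (simp add: divide_simps)
  qed
  have qq: "q*q-1 > 0" using q by (smt (verit) mult_le_cancel_left1 q0)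
  have "(q*q-1)*(p*p+1)/(p*q) / ((q*q-1)*(q*q+1)/(q*q)) = (p*p+1)*q/(p*(q*q+1))"
  proof -
    have "q*q*q*q - 1 > 0" using qq q0
      by (smt (verit, ccfv_SIG) mult_le_cancel_left1 mult_pos_pos q)
    hence d1: "p*(q*(q*(q*(q*q)))) - p*q \<noteq> 0" using p q0
      by (smt (verit, ccfv_threshold) mult.assoc mult_cancel_left1 mult_eq_0_iff mult_minus_right right_diff_distrib)
    have d2: "p + p*(q*q) \<noteq> 0" using p q0 by (smt (verit) mult_pos_pos)
    show ?thesis using p q0 qq d1 d2 by (simp add: field_simps)
  qed
  then show ?thesis using n d r by simp
qed

lemma sinh_le_t_cosh:
  fixes t :: real assumes "0 \<le> t" shows "sinh t \<le> t * cosh t"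
proof -
  have "(\<lambda>x. x * cosh x - sinh x) 0 \<le> (\<lambda>x. x * cosh x - sinh x) t"
  proof (rule DERIV_nonneg_imp_increasing_open[OF assms])
    fix x :: real assume x: "0 < x" "x < t"
    have "DERIV (\<lambda>x. x * cosh x - sinh x) x :> (1 * cosh x + x * sinh x - cosh x)"
      by (auto intro!: derivative_eq_intros)
    moreover have "0 \<le> 1 * cosh x + x * sinh x - cosh x"
      using x by simp
    ultimately show "\<exists>y. DERIV (\<lambda>x. x * cosh x - sinh x) x :> y \<and> y \<ge> 0" by blast
  next
    show "continuous_on {0..t} (\<lambda>x. x * cosh x - sinh x)"
      by (intro continuous_intros)
  qed
  then show ?thesis by simp
qed

lemma cosh_gauss_mono:
  fixes x y :: real assumes "0 \<le> y" "y \<le> x"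
  shows "cosh x * exp (-(x^2)/2) \<le> cosh y * exp (-(y^2)/2)"
proof -
  let ?f = "\<lambda>t::real. cosh t * exp (-(t^2)/2)"
  have "?f y \<ge> ?f x"
  proof (rule DERIV_nonpos_imp_nonincreasing[OF assms(2)])
    fix t assume t: "y \<le> t" "t \<le> x"
    have "DERIV ?f t :> (sinh t * exp (-(t^2)/2) + cosh t * (exp (-(t^2)/2) * (-(2 * t)/2)))"
      by (auto intro!: derivative_eq_intros simp: power2_eq_square)
    moreover have "sinh t * exp (-(t^2)/2) + cosh t * (exp (-(t^2)/2) * (-(2 * t)/2))
       = exp (-(t^2)/2) * (sinh t - t * cosh t)" by (simp add: algebra_simps)
    moreover have "exp (-(t^2)/2) * (sinh t - t * cosh t) \<le> 0"
      using sinh_le_t_cosh[of t] t assms by (simp add: mult_nonneg_nonpos)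
    ultimately show "\<exists>d. DERIV ?f t :> d \<and> d \<le> 0" by metis
  qed
  then show ?thesis by simp
qed

lemma chord_bound:
  fixes e \<alpha> :: real assumes e: "0 < e" and al: "1 \<le> \<alpha>"
  shows "(exp (e*\<alpha>) * (1 - exp (-e)) + exp (-e*\<alpha>) * (exp e - 1)) / (exp e - exp (-e))
         \<le> exp (\<alpha>*(\<alpha>-1)*e^2/2)"
proof -
  define x where "x = e*(\<alpha> - 1/2)"
  define y where "y = e/2"
  define p where "p = exp x"
  define q where "q = exp y"
  have p0: "p > 0" and q0: "q > 0" by (auto simp: p_def q_def)
  have q1: "q > 1" using e by (simp add: q_def y_def)
  have e1: "exp (e*\<alpha>) = p*q" by (simp add: p_def q_def x_def y_def flip: exp_add, simp add: algebra_simps)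
  have e2: "exp (-e*\<alpha>) = 1/(p*q)" using e1 by (simp add: exp_minus inverse_eq_divide)
  have e3: "exp e = q*q" by (simp add: q_def y_def flip: exp_add)
  have e4: "exp (-e) = 1/(q*q)" using e3 by (simp add: exp_minus inverse_eq_divide)
  have lhs: "(exp (e*\<alpha>) * (1 - exp (-e)) + exp (-e*\<alpha>) * (exp e - 1)) / (exp e - exp (-e))
     = cosh x / cosh y"
  proof -
    have cx: "cosh x = (p + 1/p)/2" by (simp add: cosh_def p_def exp_minus inverse_eq_divide)
    have cy: "cosh y = (q + 1/q)/2" by (simp add: cosh_def q_def exp_minus inverse_eq_divide)
    show ?thesis unfolding e1 e2 e3 e4 cx cy using alg_id[OF p0 q1] by simp
  qed
  have y0: "0 \<le> y" and yx: "y \<le> x" using e al by (auto simp: x_def y_def mult_left_mono)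
  have "cosh x * exp (-(x^2)/2) \<le> cosh y * exp (-(y^2)/2)" by (rule cosh_gauss_mono[OF y0 yx])
  have "cosh x / cosh y \<le> exp (x^2/2 - y^2/2)"
  proof -
    have cy: "cosh y > 0" by simp
    have "cosh x = cosh x * exp (-(x^2)/2) * exp (x^2/2)" by (simp flip: exp_add)
    also have "\<dots> \<le> cosh y * exp (-(y^2)/2) * exp (x^2/2)"
      using \<open>cosh x * exp (-(x^2)/2) \<le> cosh y * exp (-(y^2)/2)\<close> by simp
    also have "\<dots> = cosh y * exp (x^2/2 - y^2/2)" by (simp add: mult.assoc flip: exp_add)
    finally show ?thesis using cy by (simp add: divide_simps mult.commute)
  qed
  moreover have "x^2/2 - y^2/2 = \<alpha>*(\<alpha>-1)*e^2/2"
    by (simp add: x_def y_def power2_eq_square field_simps)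
  ultimately show ?thesis using lhs by simp
qed



lemma chord_pt:
  fixes e \<alpha> h :: real assumes e: "0 < e" and al: "1 \<le> \<alpha>"
    and h1: "exp (-e) \<le> h" and h2: "h \<le> exp e"
  shows "h powr \<alpha> \<le> ((exp e - h) * exp (-e*\<alpha>) + (h - exp (-e)) * exp (e*\<alpha>)) / (exp e - exp (-e))"
proof -
  define m where "m = exp (-e)"
  define M where "M = exp e"
  have mM: "m < M" using e by (simp add: m_def M_def)
  have m0: "0 < m" by (simp add: m_def)
  define t where "t = (h - m)/(M - m)"
  have t0: "0 \<le> t" and t1: "t \<le> 1" using h1 h2 mM by (auto simp: t_def m_def M_def divide_simps)
  have tt: "t * (M - m) = h - m" using mM by (simp add: t_def)
  have ht: "h = (1 - t) *\<^sub>R m + t *\<^sub>R M" using tt by (simp add: algebra_simps)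
  have "h powr \<alpha> \<le> (1 - t) * m powr \<alpha> + t * M powr \<alpha>"
    unfolding ht using convex_onD[OF powr_convex[OF al] t0 t1, of m M] m0 mM by simp
  also have "m powr \<alpha> = exp (-e*\<alpha>)" by (simp add: m_def powr_def)
  also have "M powr \<alpha> = exp (e*\<alpha>)" by (simp add: M_def powr_def mult.commute)
  also have "(1 - t) * exp (-e*\<alpha>) + t * exp (e*\<alpha>) = ((M - h) * exp (-e*\<alpha>) + (h - m) * exp (e*\<alpha>)) / (M - m)"
  proof -
    have "1 - t = (M - h)/(M - m)" using mM by (simp add: t_def field_simps)
    thus ?thesis by (simp add: t_def add_divide_distrib)
  qed
  finally show ?thesis by (simp add: m_def M_def)
qed

lemma sum_sq_bound:
  fixes a b :: real and k :: nat assumes a: "0 < a" and b: "0 < b" "b < 1"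
  shows "(\<Sum>i<k. (ln (1 + a / (real k - b * real i)))^2) \<le> a^2 / (real k * (1 - b))"
proof (cases "k = 0")
  case True then show ?thesis by simp
next
  case False
  have pos: "real k - b * real j > 0" if "j \<le> k" for j
  proof -
    have "b * real j \<le> b * real k" using that b by (simp add: mult_left_mono)
    also have "\<dots> < real k" using b False by simp
    finally show ?thesis by simp
  qed
  have "(\<Sum>i<k. (ln (1 + a / (real k - b * real i)))^2) \<le> (\<Sum>i<k. a^2 * ((1/b) * (1/(real k - b * real (Suc i)) - 1/(real k - b * real i))))"
  proof (rule sum_mono)
    fix i assume i: "i \<in> {..<k}"
    have p1: "real k - b * real i > 0" using pos[of i] i by simp
    have p2: "real k - b * real (Suc i) > 0" using pos[of "Suc i"] i by simp
    have l0: "0 \<le> ln (1 + a / (real k - b * real i))" using p1 a by simp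
    have l1: "ln (1 + a / (real k - b * real i)) \<le> a / (real k - b * real i)"
      using p1 a by (intro ln_add_one_self_le_self) simp
    have "(ln (1 + a / (real k - b * real i)))^2 \<le> (a / (real k - b * real i))^2"
      using l0 l1 by (simp add: power_mono)
    also have "\<dots> = a^2 * (1 / ((real k - b * real i) * (real k - b * real i)))"
      by (simp add: power2_eq_square)
    also have "\<dots> \<le> a^2 * (1 / ((real k - b * real (Suc i)) * (real k - b * real i)))"
    proof -
      have "(real k - b * real (Suc i)) \<le> (real k - b * real i)" using b by (simp add: algebra_simps)
      hence "(real k - b * real (Suc i)) * (real k - b * real i) \<le> (real k - b * real i) * (real k - b * real i)"
        using p1 by (simp add: mult_right_mono)
      hence "1 / ((real k - b * real i) * (real k - b * real i)) \<le> 1 / ((real k - b * real (Suc i)) * (real k - b * real i))"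
        using p1 p2 by (intro divide_left_mono) auto
      from mult_left_mono[OF this, of "a^2"] show ?thesis by simp
    qed
    also have "1 / ((real k - b * real (Suc i)) * (real k - b * real i)) =
        (1/b) * (1/(real k - b * real (Suc i)) - 1/(real k - b * real i))"
      using p1 p2 b by (simp add: field_simps)
    finally show "(ln (1 + a / (real k - b * real i)))^2 \<le> a^2 * ((1/b) * (1/(real k - b * real (Suc i)) - 1/(real k - b * real i)))" .
  qed
  also have "\<dots> = a^2 * ((1/b) * (\<Sum>i<k. (1/(real k - b * real (Suc i)) - 1/(real k - b * real i))))"
    by (simp add: sum_distrib_left)
  also have "(\<Sum>i<k. (1/(real k - b * real (Suc i)) - 1/(real k - b * real i))) = 1/(real k - b * real k) - 1/(real k - b * real 0)"
    by (rule sum_lessThan_telescope)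
  also have "a^2 * ((1/b) * (1/(real k - b * real k) - 1/(real k - b * real 0))) = a^2 / (real k * (1 - b))"
    using b False by (simp add: field_simps)
  finally show ?thesis .
qed

lemma final_alg:
  fixes \<rho> L :: real assumes r: "0 < \<rho>" and L: "0 < L"
  defines "\<alpha> \<equiv> 1 + sqrt (L / \<rho>)"
  shows "exp (-(\<alpha> - 1) * (\<rho> + 2 * sqrt (\<rho> * L)) + \<alpha> * (\<alpha> - 1) * \<rho>) = exp (-L)"
proof -
  define s where "s = sqrt (L / \<rho>)"
  have s2: "s * s = L / \<rho>" using r L by (simp add: s_def)
  have ss: "s * sqrt (\<rho> * L) = L"
  proof -
    have "s * sqrt (\<rho> * L) = sqrt (L / \<rho> * (\<rho> * L))" by (simp only: s_def real_sqrt_mult)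
    also have "L / \<rho> * (\<rho> * L) = L * L" using r by simp
    finally show ?thesis using L by simp
  qed
  have "-(\<alpha> - 1) * (\<rho> + 2 * sqrt (\<rho> * L)) + \<alpha> * (\<alpha> - 1) * \<rho> = s * s * \<rho> - 2 * (s * sqrt (\<rho> * L))"
    by (simp add: \<alpha>_def s_def[symmetric] algebra_simps)
  also have "\<dots> = -L" using s2 ss r by simp
  finally show ?thesis by simp
qed



definition upd_kernel :: "(nat \<Rightarrow> 's measure) \<Rightarrow> (nat \<Rightarrow> (nat \<Rightarrow> 's) \<Rightarrow> 'd list \<Rightarrow> 's measure) \<Rightarrow> nat \<Rightarrow> 'd list \<Rightarrow> (nat \<Rightarrow> 's) \<Rightarrow> (nat \<Rightarrow> 's) measure" where
  "upd_kernel S A i D s = distr (A i s D) (PiM {..<Suc i} S) (\<lambda>x. s(i := x))"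

lemma comp_Suc: "adaptive_comp S A (Suc i) D = bind (adaptive_comp S A i D) (upd_kernel S A i D)"
  by (simp add: upd_kernel_def[abs_def])

lemma upd_meas: "(\<lambda>(s, x). s(i := x)) \<in> PiM {..<i} S \<Otimes>\<^sub>M S i \<rightarrow>\<^sub>M PiM {..<Suc i} S"
  using measurable_add_dim[of i "{..<i}" S] by (simp add: lessThan_Suc)

lemma upd_meas1: "s \<in> space (PiM {..<i} S) \<Longrightarrow> (\<lambda>x. s(i := x)) \<in> S i \<rightarrow>\<^sub>M PiM {..<Suc i} S"
  using measurable_component_update[of s "{..<i}" S i] by (simp add: lessThan_Suc)

lemma K_meas:
  assumes "(\<lambda>s. A i s D) \<in> PiM {..<i} S \<rightarrow>\<^sub>M prob_algebra (S i)"
  shows "upd_kernel S A i D \<in> PiM {..<i} S \<rightarrow>\<^sub>M prob_algebra (PiM {..<Suc i} S)"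
  unfolding upd_kernel_def
  by (rule measurable_distr_prob_space2[OF assms upd_meas])

lemma comp_space:
  assumes "\<And>j. j < i \<Longrightarrow> (\<lambda>s. A j s D) \<in> PiM {..<j} S \<rightarrow>\<^sub>M prob_algebra (S j)"
  shows "adaptive_comp S A i D \<in> space (prob_algebra (PiM {..<i} S))"
  using assms
proof (induction i)
  case 0
  show ?case by (simp add: space_prob_algebra prob_space_return space_PiM_empty)
next
  case (Suc i)
  have P: "adaptive_comp S A i D \<in> space (prob_algebra (PiM {..<i} S))" using Suc by simp
  have K: "upd_kernel S A i D \<in> PiM {..<i} S \<rightarrow>\<^sub>M prob_algebra (PiM {..<Suc i} S)"
    using Suc.prems by (intro K_meas) simp
  show ?case unfolding comp_Suc space_prob_algebra
    using prob_space_bind'[OF P K] sets_bind'[OF P K] by simp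
qed

lemma restrict_upd:
  fixes i :: nat
  assumes "s \<in> space (PiM {..<i} S)"
  shows "restrict (s(i := x)) {..<i} = s"
proof -
  have "s \<in> extensional {..<i}" using assms by (simp add: space_PiM PiE_def)
  show ?thesis
  proof
    fix j show "restrict (s(i := x)) {..<i} j = s j"
      using \<open>s \<in> extensional {..<i}\<close> by (cases "j < i") (auto simp: extensional_def)
  qed
qed

lemma kern_int:
  assumes s: "s \<in> space (PiM {..<i} S)" and As: "A i s D \<in> space (prob_algebra (S i))"
    and g[measurable]: "g \<in> borel_measurable (PiM {..<i} S)"
    and psi[measurable]: "psi \<in> borel_measurable (PiM {..<Suc i} S)"
  shows "(\<integral>\<^sup>+ t. g (restrict t {..<i}) * psi t \<partial>(upd_kernel S A i D s)) = g s * (\<integral>\<^sup>+ t. psi t \<partial>(upd_kernel S A i D s))"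
proof -
  have sets: "sets (A i s D) = sets (S i)" using As by (simp add: space_prob_algebra)
  have u: "(\<lambda>x. s(i := x)) \<in> A i s D \<rightarrow>\<^sub>M PiM {..<Suc i} S"
    using upd_meas1[OF s] by (simp add: measurable_cong_sets[OF sets refl])
  have r[measurable]: "(\<lambda>t. restrict t {..<i}) \<in> PiM {..<Suc i} S \<rightarrow>\<^sub>M PiM {..<i} S"
    by (rule measurable_restrict_subset) auto
  have "(\<integral>\<^sup>+ t. g (restrict t {..<i}) * psi t \<partial>(upd_kernel S A i D s))
      = (\<integral>\<^sup>+ x. g (restrict (s(i := x)) {..<i}) * psi (s(i := x)) \<partial>A i s D)"
    unfolding upd_kernel_def by (rule nn_integral_distr[OF u]) measurable
  also have "\<dots> = (\<integral>\<^sup>+ x. g s * psi (s(i := x)) \<partial>A i s D)"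
    using restrict_upd[OF s] by simp
  also have "\<dots> = g s * (\<integral>\<^sup>+ x. psi (s(i := x)) \<partial>A i s D)"
    by (rule nn_integral_cmult) (use u in measurable)
  also have "(\<integral>\<^sup>+ x. psi (s(i := x)) \<partial>A i s D) = (\<integral>\<^sup>+ t. psi t \<partial>(upd_kernel S A i D s))"
    unfolding upd_kernel_def by (rule nn_integral_distr[OF u, symmetric]) measurable
  finally show ?thesis .
qed



lemma dens_upper:
  assumes fin: "finite_measure R" and g[measurable]: "g \<in> borel_measurable R"
    and le: "\<And>X. X \<in> sets R \<Longrightarrow> emeasure (density R g) X \<le> c * emeasure R X" and c: "c < \<infinity>"
  shows "AE x in R. g x \<le> c"
proof -
  interpret finite_measure R by fact
  define X where "X = {x\<in>space R. c < g x}"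
  have X[measurable]: "X \<in> sets R" unfolding X_def by measurable
  have f1: "(\<integral>\<^sup>+x. c * indicator X x \<partial>R) \<noteq> \<infinity>"
    using c by (simp add: nn_integral_cmult_indicator[OF X] ennreal_mult_eq_top_iff)
  have ae1: "AE x in R. c * indicator X x \<le> g x * indicator X x"
    by (intro AE_I2) (auto simp: X_def indicator_def less_imp_le)
  have "AE x in R. g x * indicator X x \<le> c * indicator X x"
  proof (rule ccontr)
    assume "\<not> ?thesis"
    from nn_integral_less[OF _ _ f1 ae1 this]
    have "(\<integral>\<^sup>+x. c * indicator X x \<partial>R) < (\<integral>\<^sup>+x. g x * indicator X x \<partial>R)" by measurable
    also have "\<dots> = emeasure (density R g) X" by (simp add: emeasure_density)
    also have "\<dots> \<le> c * emeasure R X" by (rule le[OF X])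
    finally show False by (simp add: nn_integral_cmult_indicator[OF X])
  qed
  moreover note AE_space
  ultimately show ?thesis
  proof eventually_elim
    case (elim x) then show ?case by (cases "c < g x"; cases "g x < c") (auto simp: X_def indicator_def not_less)
  qed
qed

lemma dens_lower:
  assumes fin: "finite_measure R" and g[measurable]: "g \<in> borel_measurable R"
    and le: "\<And>X. X \<in> sets R \<Longrightarrow> c * emeasure R X \<le> emeasure (density R g) X"
    and fin2: "\<And>X. X \<in> sets R \<Longrightarrow> emeasure (density R g) X \<noteq> \<infinity>"
  shows "AE x in R. c \<le> g x"
proof -
  interpret finite_measure R by fact
  define X where "X = {x\<in>space R. g x < c}"
  have X[measurable]: "X \<in> sets R" unfolding X_def by measurable
  have f1: "(\<integral>\<^sup>+x. g x * indicator X x \<partial>R) \<noteq> \<infinity>"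
    using fin2[OF X] by (simp add: emeasure_density)
  have ae1: "AE x in R. g x * indicator X x \<le> c * indicator X x"
    by (intro AE_I2) (auto simp: X_def indicator_def less_imp_le)
  have "AE x in R. c * indicator X x \<le> g x * indicator X x"
  proof (rule ccontr)
    assume "\<not> ?thesis"
    from nn_integral_less[OF _ _ f1 ae1 this]
    have "(\<integral>\<^sup>+x. g x * indicator X x \<partial>R) < (\<integral>\<^sup>+x. c * indicator X x \<partial>R)" by measurable
    also have "\<dots> = c * emeasure R X" by (simp add: nn_integral_cmult_indicator[OF X])
    also have "\<dots> \<le> emeasure (density R g) X" by (rule le[OF X])
    finally show False by (simp add: emeasure_density)
  qed
  moreover note AE_space
  ultimately show ?thesis
  proof eventually_elim
    case (elim x) then show ?case by (cases "c < g x"; cases "g x < c") (auto simp: X_def indicator_def not_less)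
  qed
qed




definition cst :: "real \<Rightarrow> real \<Rightarrow> real" where
  "cst e \<alpha> = (exp (e*\<alpha>) * (1 - exp (-e)) + exp (-e*\<alpha>) * (exp e - 1)) / (exp e - exp (-e))"

lemma marg:
  fixes S :: "nat \<Rightarrow> 's measure" and A :: "nat \<Rightarrow> (nat \<Rightarrow> 's) \<Rightarrow> 'd list \<Rightarrow> 's measure"
  assumes KD: "(\<lambda>s. A i s D) \<in> PiM {..<i} S \<rightarrow>\<^sub>M prob_algebra (S i)"
    and P1: "P \<in> space (prob_algebra (PiM {..<i} S))"
    and G[measurable]: "G \<in> borel_measurable (PiM {..<i} S)"
  shows "(\<integral>\<^sup>+ t. G (restrict t {..<i}) \<partial>bind P (upd_kernel S A i D)) = (\<integral>\<^sup>+ s. G s \<partial>P)"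
proof -
  have K: "upd_kernel S A i D \<in> PiM {..<i} S \<rightarrow>\<^sub>M prob_algebra (PiM {..<Suc i} S)"
    by (rule K_meas[where A=A and i=i and D=D and S=S, OF KD])
  have sP: "sets P = sets (PiM {..<i} S)" using P1 by (simp add: space_prob_algebra)
  have spP: "space P = space (PiM {..<i} S)" using sets_eq_imp_space_eq[OF sP] .
  have Ks: "upd_kernel S A i D \<in> P \<rightarrow>\<^sub>M subprob_algebra (PiM {..<Suc i} S)"
    using measurable_prob_algebraD[OF K] by (simp add: measurable_cong_sets[OF sP refl])
  have r[measurable]: "(\<lambda>t. restrict t {..<i}) \<in> PiM {..<Suc i} S \<rightarrow>\<^sub>M PiM {..<i} S"
    by (rule measurable_restrict_subset) auto
  have "(\<integral>\<^sup>+ t. G (restrict t {..<i}) \<partial>bind P (upd_kernel S A i D))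
     = (\<integral>\<^sup>+ s. \<integral>\<^sup>+ t. G (restrict t {..<i}) \<partial>upd_kernel S A i D s \<partial>P)"
    by (rule nn_integral_bind[OF _ Ks]) measurable
  also have "\<dots> = (\<integral>\<^sup>+ s. G s \<partial>P)"
  proof (rule nn_integral_cong)
    fix s assume s: "s \<in> space P"
    hence s': "s \<in> space (PiM {..<i} S)" by (simp add: spP)
    have As: "A i s D \<in> space (prob_algebra (S i))" using measurable_space[OF KD s'] .
    have Ksp: "upd_kernel S A i D s \<in> space (prob_algebra (PiM {..<Suc i} S))" using measurable_space[OF K s'] .
    then interpret prob_space "upd_kernel S A i D s" by (simp add: space_prob_algebra)
    have "(\<integral>\<^sup>+ t. G (restrict t {..<i}) \<partial>upd_kernel S A i D s) = (\<integral>\<^sup>+ t. G (restrict t {..<i}) * 1 \<partial>upd_kernel S A i D s)"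
      by simp
    also have "\<dots> = G s * (\<integral>\<^sup>+ t. 1 \<partial>upd_kernel S A i D s)"
      using kern_int[where A=A and i=i and D=D and S=S and s=s and g=G and psi="\<lambda>_. 1", OF s' As G] by simp
    also have "\<dots> = G s" using emeasure_space_1 by simp
    finally show "(\<integral>\<^sup>+ t. G (restrict t {..<i}) \<partial>upd_kernel S A i D s) = G s" .
  qed
  finally show ?thesis .
qed


lemma step:
  fixes S :: "nat \<Rightarrow> 's measure" and A :: "nat \<Rightarrow> (nat \<Rightarrow> 's) \<Rightarrow> 'd list \<Rightarrow> 's measure"
  assumes KD: "(\<lambda>s. A i s D) \<in> PiM {..<i} S \<rightarrow>\<^sub>M prob_algebra (S i)"
    and KD': "(\<lambda>s. A i s D') \<in> PiM {..<i} S \<rightarrow>\<^sub>M prob_algebra (S i)"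
    and P: "P \<in> space (prob_algebra (PiM {..<i} S))"
    and Q: "Q \<in> space (prob_algebra (PiM {..<i} S))"
    and priv1: "\<And>s X. s \<in> space (PiM {..<i} S) \<Longrightarrow> X \<in> sets (S i) \<Longrightarrow>
                  measure (A i s D) X \<le> exp e * measure (A i s D') X"
    and priv2: "\<And>s X. s \<in> space (PiM {..<i} S) \<Longrightarrow> X \<in> sets (S i) \<Longrightarrow>
                  measure (A i s D') X \<le> exp e * measure (A i s D) X"
    and e: "0 < e" and al: "1 < \<alpha>"
    and f[measurable]: "f \<in> borel_measurable (PiM {..<i} S)"
    and f0: "\<And>x. 0 \<le> f x" and fB: "\<And>x. f x \<le> B"
    and dens: "P = density Q (\<lambda>x. ennreal (f x))"
    and mom: "(\<integral>\<^sup>+ x. ennreal (f x powr \<alpha>) \<partial>Q) \<le> ennreal C" and C0: "0 \<le> C"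
  shows "\<exists>f'. f' \<in> borel_measurable (PiM {..<Suc i} S) \<and> (\<forall>x. 0 \<le> f' x) \<and> (\<forall>x. f' x \<le> B * exp e)
     \<and> bind P (upd_kernel S A i D) = density (bind Q (upd_kernel S A i D')) (\<lambda>x. ennreal (f' x))
     \<and> (\<integral>\<^sup>+ x. ennreal (f' x powr \<alpha>) \<partial>bind Q (upd_kernel S A i D')) \<le> ennreal (cst e \<alpha> * C)"
proof -
  define Mi where "Mi = PiM {..<i} S"
  define N where "N = PiM {..<Suc i} S"
  define K where "K = upd_kernel S A i D"
  define L where "L = upd_kernel S A i D'"
  define P' where "P' = bind P K"
  define Q' where "Q' = bind Q L"
  define R where "R = bind P L"
  have K[measurable]: "K \<in> Mi \<rightarrow>\<^sub>M prob_algebra N" unfolding K_def Mi_def N_def by (rule K_meas[where A=A and i=i and D=D and S=S, OF KD])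
  have L[measurable]: "L \<in> Mi \<rightarrow>\<^sub>M prob_algebra N" unfolding L_def Mi_def N_def by (rule K_meas[where A=A and i=i and D=D' and S=S, OF KD'])
  have Ks: "K \<in> Mi \<rightarrow>\<^sub>M subprob_algebra N" by (rule measurable_prob_algebraD[OF K])
  have Ls: "L \<in> Mi \<rightarrow>\<^sub>M subprob_algebra N" by (rule measurable_prob_algebraD[OF L])
  have P1: "P \<in> space (prob_algebra Mi)" and Q1: "Q \<in> space (prob_algebra Mi)" using P Q by (simp_all add: Mi_def)
  have sP: "sets P = sets Mi" and sQ: "sets Q = sets Mi" using P1 Q1 by (auto simp: space_prob_algebra)
  have spP: "space P = space Mi" and spQ: "space Q = space Mi"
    using sets_eq_imp_space_eq[OF sP] sets_eq_imp_space_eq[OF sQ] by auto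
  have pP: "prob_space P" and pQ: "prob_space Q" using P1 Q1 by (auto simp: space_prob_algebra)
  have pP': "prob_space P'" and sP': "sets P' = sets N" unfolding P'_def using prob_space_bind'[OF P1 K] sets_bind'[OF P1 K] by auto
  have pQ': "prob_space Q'" and sQ': "sets Q' = sets N" unfolding Q'_def using prob_space_bind'[OF Q1 L] sets_bind'[OF Q1 L] by auto
  have pR: "prob_space R" and sR: "sets R = sets N" unfolding R_def using prob_space_bind'[OF P1 L] sets_bind'[OF P1 L] by auto
  have r[measurable]: "(\<lambda>t. restrict t {..<i}) \<in> N \<rightarrow>\<^sub>M Mi"
    unfolding N_def Mi_def by (rule measurable_restrict_subset) auto
  have fMi[measurable]: "f \<in> borel_measurable Mi" using f by (simp add: Mi_def)
  have kb: "emeasure (K s) X \<le> ennreal (exp e) * emeasure (L s) X \<and> ennreal (exp (-e)) * emeasure (L s) X \<le> emeasure (K s) X"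
    if s: "s \<in> space Mi" and X: "X \<in> sets N" for s X
  proof -
    have s': "s \<in> space (PiM {..<i} S)" using s by (simp add: Mi_def)
    have As: "A i s D \<in> space (prob_algebra (S i))" using measurable_space[OF KD s'] .
    have As': "A i s D' \<in> space (prob_algebra (S i))" using measurable_space[OF KD' s'] .
    have sA: "sets (A i s D) = sets (S i)" and sA': "sets (A i s D') = sets (S i)"
      using As As' by (auto simp: space_prob_algebra)
    have spA: "space (A i s D) = space (S i)" and spA': "space (A i s D') = space (S i)"
      using sets_eq_imp_space_eq[OF sA] sets_eq_imp_space_eq[OF sA'] by auto
    have u: "(\<lambda>x. s(i := x)) \<in> S i \<rightarrow>\<^sub>M N" using upd_meas1[OF s'] by (simp add: N_def)
    have uA: "(\<lambda>x. s(i := x)) \<in> A i s D \<rightarrow>\<^sub>M N" using u by (simp add: measurable_cong_sets[OF sA refl])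
    have uA': "(\<lambda>x. s(i := x)) \<in> A i s D' \<rightarrow>\<^sub>M N" using u by (simp add: measurable_cong_sets[OF sA' refl])
    define Y where "Y = (\<lambda>x. s(i := x)) -` X \<inter> space (S i)"
    have Y: "Y \<in> sets (S i)" unfolding Y_def using measurable_sets[OF u X] .
    have mK: "measure (K s) X = measure (A i s D) Y"
      unfolding K_def upd_kernel_def N_def[symmetric] Y_def using measure_distr[OF uA X] spA by simp
    have mL: "measure (L s) X = measure (A i s D') Y"
      unfolding L_def upd_kernel_def N_def[symmetric] Y_def using measure_distr[OF uA' X] spA' by simp
    have "K s \<in> space (prob_algebra N)" using measurable_space[OF K s] .
    then interpret KS: prob_space "K s" by (simp add: space_prob_algebra)
    have "L s \<in> space (prob_algebra N)" using measurable_space[OF L s] .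
    then interpret LS: prob_space "L s" by (simp add: space_prob_algebra)
    have i1: "measure (K s) X \<le> exp e * measure (L s) X" unfolding mK mL using priv1[OF s' Y] .
    have "measure (L s) X \<le> exp e * measure (K s) X" unfolding mK mL using priv2[OF s' Y] .
    hence i2: "exp (-e) * measure (L s) X \<le> measure (K s) X"
      by (simp add: exp_minus divide_simps mult.commute)
    show ?thesis using i1 i2
      by (simp add: KS.emeasure_eq_measure LS.emeasure_eq_measure ennreal_mult[symmetric] ennreal_le_iff)
  qed
  have Lm: "(\<lambda>s. emeasure (L s) X) \<in> borel_measurable P" if "X \<in> sets N" for X
    using measurable_emeasure_kernel[OF Ls that] by (simp add: measurable_cong_sets[OF sP refl])
  have Km: "(\<lambda>s. emeasure (K s) X) \<in> borel_measurable P" if "X \<in> sets N" for X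
    using measurable_emeasure_kernel[OF Ks that] by (simp add: measurable_cong_sets[OF sP refl])
  have PR: "emeasure P' X \<le> ennreal (exp e) * emeasure R X" if X: "X \<in> sets R" for X
  proof -
    have X': "X \<in> sets N" using X sR by simp
    have "emeasure P' X = (\<integral>\<^sup>+ s. emeasure (K s) X \<partial>P)"
      unfolding P'_def by (rule emeasure_bind_prob_algebra[OF P1 K X'])
    also have "\<dots> \<le> (\<integral>\<^sup>+ s. ennreal (exp e) * emeasure (L s) X \<partial>P)"
      using kb X' by (intro nn_integral_mono) (auto simp: spP)
    also have "\<dots> = ennreal (exp e) * (\<integral>\<^sup>+ s. emeasure (L s) X \<partial>P)"
      by (rule nn_integral_cmult[OF Lm[OF X']])
    also have "(\<integral>\<^sup>+ s. emeasure (L s) X \<partial>P) = emeasure R X"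
      unfolding R_def by (rule emeasure_bind_prob_algebra[OF P1 L X', symmetric])
    finally show ?thesis .
  qed
  have RP: "ennreal (exp (-e)) * emeasure R X \<le> emeasure P' X" if X: "X \<in> sets R" for X
  proof -
    have X': "X \<in> sets N" using X sR by simp
    have "emeasure R X = (\<integral>\<^sup>+ s. emeasure (L s) X \<partial>P)"
      unfolding R_def by (rule emeasure_bind_prob_algebra[OF P1 L X'])
    hence "ennreal (exp (-e)) * emeasure R X = (\<integral>\<^sup>+ s. ennreal (exp (-e)) * emeasure (L s) X \<partial>P)"
      by (simp add: nn_integral_cmult[OF Lm[OF X']])
    also have "\<dots> \<le> (\<integral>\<^sup>+ s. emeasure (K s) X \<partial>P)"
      using kb X' by (intro nn_integral_mono) (auto simp: spP)
    also have "\<dots> = emeasure P' X"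
      unfolding P'_def by (rule emeasure_bind_prob_algebra[OF P1 K X', symmetric])
    finally show ?thesis .
  qed
  interpret R: prob_space R by (rule pR)
  interpret P': prob_space P' by (rule pP')
  have ac: "absolutely_continuous R P'"
    unfolding absolutely_continuous_def
  proof
    fix X assume "X \<in> null_sets R"
    hence X: "X \<in> sets R" "emeasure R X = 0" by auto
    have "emeasure P' X \<le> 0" using PR[OF X(1)] X(2) by simp
    thus "X \<in> null_sets P'" using X sR sP' by auto
  qed
  define h0 where "h0 = RN_deriv R P'"
  have dh0: "density R h0 = P'" unfolding h0_def by (rule R.density_RN_deriv[OF ac]) (simp add: sP' sR)
  have h0m[measurable]: "h0 \<in> borel_measurable R" by (simp add: h0_def)
  have up: "AE x in R. h0 x \<le> ennreal (exp e)"
    by (rule dens_upper[OF R.finite_measure_axioms h0m]) (auto simp: dh0 PR)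
  have lo: "AE x in R. ennreal (exp (-e)) \<le> h0 x"
    by (rule dens_lower[OF R.finite_measure_axioms h0m]) (auto simp: dh0 RP)
  define h where "h x = max (exp (-e)) (min (exp e) (enn2real (h0 x)))" for x
  have h0N[measurable]: "h0 \<in> borel_measurable N" using h0m by (simp add: measurable_cong_sets[OF sR refl])
  have hm[measurable]: "h \<in> borel_measurable N" unfolding h_def by measurable
  have hb1: "exp (-e) \<le> h x" and hb2: "h x \<le> exp e" for x
    unfolding h_def using e by auto
  have hae: "AE x in R. h0 x = ennreal (h x)"
    using up lo
  proof eventually_elim
    case (elim x)
    then show ?case
    proof (cases "h0 x" rule: ennreal_cases)
      case (real r)
      then have "exp (-e) \<le> r" "r \<le> exp e" using elim by (auto simp: ennreal_le_iff)
      then show ?thesis using real by (simp add: h_def)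
    qed (use elim in \<open>simp add: top_unique\<close>)
  qed
  have P'h: "P' = density R (\<lambda>x. ennreal (h x))"
    using dh0 density_cong[OF h0m _ hae] by (simp add: measurable_cong_sets[OF sR refl])
  define g where "g t = f (restrict t {..<i})" for t
  have gm[measurable]: "g \<in> borel_measurable N" unfolding g_def by measurable
  have g0: "0 \<le> g t" for t by (simp add: g_def f0)
  have Ls': "L \<in> Q \<rightarrow>\<^sub>M subprob_algebra N" using Ls by (simp add: measurable_cong_sets[OF sQ refl])
  have Rd: "R = density Q' (\<lambda>t. ennreal (g t))"
  proof (rule measure_eqI)
    show "sets R = sets (density Q' (\<lambda>t. ennreal (g t)))" by (simp add: sR sQ')
  next
    fix X assume "X \<in> sets R"
    hence X[measurable]: "X \<in> sets N" by (simp add: sR)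
    have "emeasure R X = (\<integral>\<^sup>+ s. emeasure (L s) X \<partial>P)"
      unfolding R_def by (rule emeasure_bind_prob_algebra[OF P1 L X])
    also have "\<dots> = (\<integral>\<^sup>+ s. ennreal (f s) * emeasure (L s) X \<partial>Q)"
      unfolding dens
      by (rule nn_integral_density)
         (use Lm[OF X] in \<open>simp_all add: measurable_cong_sets[OF sQ refl] measurable_cong_sets[OF sP refl] fMi\<close>)
    also have "\<dots> = (\<integral>\<^sup>+ s. \<integral>\<^sup>+ t. ennreal (g t) * indicator X t \<partial>L s \<partial>Q)"
    proof (rule nn_integral_cong)
      fix s assume s: "s \<in> space Q"
      hence s': "s \<in> space (PiM {..<i} S)" by (simp add: spQ Mi_def)
      have As': "A i s D' \<in> space (prob_algebra (S i))" using measurable_space[OF KD' s'] .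
      have sLs: "sets (L s) = sets N" using measurable_space[OF L, of s] s spQ by (simp add: space_prob_algebra)
      have "(\<integral>\<^sup>+ t. ennreal (g t) * indicator X t \<partial>L s) = ennreal (f s) * (\<integral>\<^sup>+ t. indicator X t \<partial>L s)"
        unfolding g_def L_def
        using kern_int[where A=A and i=i and D=D' and S=S and s=s and g="\<lambda>s. ennreal (f s)" and psi="indicator X", OF s' As']
        by (simp add: N_def[symmetric])
      also have "\<dots> = ennreal (f s) * emeasure (L s) X" using X sLs by simp
      finally show "ennreal (f s) * emeasure (L s) X = (\<integral>\<^sup>+ t. ennreal (g t) * indicator X t \<partial>L s)" by simp
    qed
    also have "\<dots> = (\<integral>\<^sup>+ t. ennreal (g t) * indicator X t \<partial>Q')"
      unfolding Q'_def by (rule nn_integral_bind[OF _ Ls', symmetric]) measurable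
    also have "\<dots> = emeasure (density Q' (\<lambda>t. ennreal (g t))) X"
      by (rule emeasure_density[symmetric]) (simp_all add: measurable_cong_sets[OF sQ' refl] sQ')
    finally show "emeasure R X = emeasure (density Q' (\<lambda>t. ennreal (g t))) X" .
  qed
  define f' where "f' t = g t * h t" for t
  have f'm: "f' \<in> borel_measurable (PiM {..<Suc i} S)" unfolding f'_def N_def[symmetric] by measurable
  have f'0: "\<forall>x. 0 \<le> f' x" using g0 hb1 unfolding f'_def
    by (meson exp_ge_zero order_trans zero_le_mult_iff)
  have f'B: "\<forall>x. f' x \<le> B * exp e"
  proof
    fix x
    have "g x \<le> B" by (simp add: g_def fB)
    thus "f' x \<le> B * exp e" unfolding f'_def using hb2[of x] g0[of x] hb1[of x]
      by (meson exp_ge_zero mult_mono order_trans)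
  qed
  have gQ'[measurable]: "g \<in> borel_measurable Q'" using gm by (simp add: measurable_cong_sets[OF sQ' refl])
  have hQ'[measurable]: "h \<in> borel_measurable Q'" using hm by (simp add: measurable_cong_sets[OF sQ' refl])
  have P'd: "P' = density Q' (\<lambda>x. ennreal (f' x))"
  proof -
    have "P' = density (density Q' (\<lambda>t. ennreal (g t))) (\<lambda>x. ennreal (h x))" using P'h Rd by simp
    also have "\<dots> = density Q' (\<lambda>t. ennreal (g t) * ennreal (h t))"
      by (rule density_density_eq) measurable
    also have "\<dots> = density Q' (\<lambda>x. ennreal (f' x))"
    proof -
      have "ennreal (g t) * ennreal (h t) = ennreal (f' t)" for t
      proof -
        have "0 \<le> h t" using hb1[of t] exp_ge_zero[of "-e"] by linarith
        thus ?thesis using g0[of t] by (simp add: f'_def ennreal_mult)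
      qed
      thus ?thesis by simp
    qed
    finally show ?thesis .
  qed
  define \<beta> where "\<beta> = \<alpha> - 1"
  have be: "0 < \<beta>" using al by (simp add: \<beta>_def)
  have pw: "x * x powr \<beta> = x powr \<alpha>" if "0 \<le> x" for x :: real
  proof (cases "x = 0")
    case True then show ?thesis by simp
  next
    case False
    then have "x powr \<alpha> = x powr (1 + \<beta>)" by (simp add: \<beta>_def)
    also have "\<dots> = x * x powr \<beta>" using False that by (simp add: powr_add)
    finally show ?thesis by simp
  qed
  have h0': "0 \<le> h t" for t using hb1[of t] exp_ge_zero[of "-e"] by linarith
  define I where "I = (\<integral>\<^sup>+ s. ennreal (f s powr \<beta>) \<partial>P)"
  have fQ[measurable]: "f \<in> borel_measurable Q" using fMi by (simp add: measurable_cong_sets[OF sQ refl])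
  have I_eq: "I = (\<integral>\<^sup>+ s. ennreal (f s powr \<alpha>) \<partial>Q)"
  proof -
    have "I = (\<integral>\<^sup>+ s. ennreal (f s) * ennreal (f s powr \<beta>) \<partial>Q)"
      unfolding I_def dens by (rule nn_integral_density) measurable
    also have "\<dots> = (\<integral>\<^sup>+ s. ennreal (f s powr \<alpha>) \<partial>Q)"
      using f0 pw by (simp add: ennreal_mult[symmetric])
    finally show ?thesis .
  qed
  have Ile: "I \<le> ennreal C" using mom I_eq by simp
  have Gm: "(\<lambda>s. ennreal (f s powr \<beta>)) \<in> borel_measurable (PiM {..<i} S)" by measurable
  have margR: "(\<integral>\<^sup>+ t. ennreal (g t powr \<beta>) \<partial>R) = I"
    unfolding R_def L_def I_def g_def using marg[where A=A and i=i and D=D' and S=S, OF KD' P Gm] .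
  have margP': "(\<integral>\<^sup>+ t. ennreal (g t powr \<beta>) \<partial>P') = I"
    unfolding P'_def K_def I_def g_def using marg[where A=A and i=i and D=D and S=S, OF KD P Gm] .
  have gR[measurable]: "g \<in> borel_measurable R" using gm by (simp add: measurable_cong_sets[OF sR refl])
  have hR[measurable]: "h \<in> borel_measurable R" using hm by (simp add: measurable_cong_sets[OF sR refl])
  have hP': "(\<integral>\<^sup>+ t. ennreal (g t powr \<beta> * h t) \<partial>R) = I"
  proof -
    have "(\<integral>\<^sup>+ t. ennreal (g t powr \<beta>) \<partial>P') = (\<integral>\<^sup>+ t. ennreal (h t) * ennreal (g t powr \<beta>) \<partial>R)"
      by (subst P'h) (rule nn_integral_density; measurable)
    also have "\<dots> = (\<integral>\<^sup>+ t. ennreal (g t powr \<beta> * h t) \<partial>R)"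
      using h0' by (simp add: ennreal_mult[symmetric] mult.commute)
    finally show ?thesis using margP' by simp
  qed
  have momR: "(\<integral>\<^sup>+ t. ennreal (f' t powr \<alpha>) \<partial>Q') = (\<integral>\<^sup>+ t. ennreal (g t powr \<beta> * h t powr \<alpha>) \<partial>R)"
  proof -
    have "(\<integral>\<^sup>+ t. ennreal (g t powr \<beta> * h t powr \<alpha>) \<partial>R) = (\<integral>\<^sup>+ t. ennreal (g t) * ennreal (g t powr \<beta> * h t powr \<alpha>) \<partial>Q')"
      by (subst Rd) (rule nn_integral_density; measurable)
    also have "\<dots> = (\<integral>\<^sup>+ t. ennreal (f' t powr \<alpha>) \<partial>Q')"
    proof (rule nn_integral_cong)
      fix t
      have "g t * (g t powr \<beta> * h t powr \<alpha>) = (g t * g t powr \<beta>) * h t powr \<alpha>" by simp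
      also have "\<dots> = g t powr \<alpha> * h t powr \<alpha>" using pw[OF g0[of t]] by simp
      also have "\<dots> = f' t powr \<alpha>" unfolding f'_def using g0[of t] h0'[of t] by (simp add: powr_mult)
      finally show "ennreal (g t) * ennreal (g t powr \<beta> * h t powr \<alpha>) = ennreal (f' t powr \<alpha>)"
        using g0[of t] by (simp add: ennreal_mult[symmetric])
    qed
    finally show ?thesis by simp
  qed
  define m where "m = exp (-e)"
  define Mx where "Mx = exp e"
  define ma where "ma = exp (-e*\<alpha>)"
  define Ma where "Ma = exp (e*\<alpha>)"
  have mM: "m < Mx" using e by (simp add: m_def Mx_def)
  define c1 where "c1 = (Ma - ma) / (Mx - m)"
  define c0 where "c0 = (m * Ma - Mx * ma) / (Mx - m)"
  have c0p: "0 \<le> c0"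
  proof -
    have "Mx * ma = exp (e - e*\<alpha>)" by (simp add: Mx_def ma_def flip: exp_add)
    moreover have "m * Ma = exp (e*\<alpha> - e)" by (simp add: m_def Ma_def flip: exp_add)
    moreover have "e - e*\<alpha> \<le> e*\<alpha> - e" using e al by (simp add: algebra_simps)
    ultimately have "Mx * ma \<le> m * Ma" by simp
    thus ?thesis using mM by (simp add: c0_def)
  qed
  have c1p: "0 \<le> c1"
  proof -
    have "ma \<le> Ma" unfolding ma_def Ma_def using e al by simp
    thus ?thesis using mM by (simp add: c1_def)
  qed
  have cst_eq: "cst e \<alpha> = c1 - c0"
    unfolding cst_def c1_def c0_def m_def Mx_def ma_def Ma_def by (simp add: diff_divide_distrib[symmetric] algebra_simps)
  have cst_pos: "0 \<le> cst e \<alpha>"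
    unfolding cst_def using e by (intro divide_nonneg_nonneg add_nonneg_nonneg mult_nonneg_nonneg) auto
  have hh: "h t powr \<alpha> + c0 \<le> c1 * h t" for t
  proof -
    have "h t powr \<alpha> \<le> ((Mx - h t) * ma + (h t - m) * Ma) / (Mx - m)"
      unfolding m_def Mx_def ma_def Ma_def using chord_pt[OF e _ hb1[of t] hb2[of t]] al by simp
    also have "\<dots> = c1 * h t - c0"
    proof -
      have "(Mx - h t) * ma + (h t - m) * Ma = h t * (Ma - ma) - (m * Ma - Mx * ma)" by (simp add: algebra_simps)
      moreover have "h t * (Ma - ma) / (Mx - m) = (Ma - ma) / (Mx - m) * h t" by simp
      ultimately show ?thesis unfolding c1_def c0_def by (simp only: diff_divide_distrib)
    qed
    finally show ?thesis by simp
  qed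
  define MomR where "MomR = (\<integral>\<^sup>+ t. ennreal (g t powr \<beta> * h t powr \<alpha>) \<partial>R)"
  have key: "MomR + ennreal c0 * I \<le> ennreal c1 * I"
  proof -
    have "MomR + ennreal c0 * I = (\<integral>\<^sup>+ t. ennreal (g t powr \<beta> * h t powr \<alpha>) \<partial>R) + (\<integral>\<^sup>+ t. ennreal c0 * ennreal (g t powr \<beta>) \<partial>R)"
      unfolding MomR_def margR[symmetric] by (subst nn_integral_cmult) measurable
    also have "\<dots> = (\<integral>\<^sup>+ t. ennreal (g t powr \<beta> * h t powr \<alpha>) + ennreal c0 * ennreal (g t powr \<beta>) \<partial>R)"
      by (rule nn_integral_add[symmetric]) measurable
    also have "\<dots> \<le> (\<integral>\<^sup>+ t. ennreal c1 * ennreal (g t powr \<beta> * h t) \<partial>R)"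
    proof (rule nn_integral_mono)
      fix t
      have "g t powr \<beta> * h t powr \<alpha> + c0 * g t powr \<beta> \<le> c1 * (g t powr \<beta> * h t)"
        using hh[of t] mult_left_mono[OF hh[of t], of "g t powr \<beta>"] by (simp add: algebra_simps)
      moreover have "0 \<le> c1 * (g t powr \<beta> * h t)"
        using c1p h0'[of t] by simp
      moreover have "ennreal (g t powr \<beta> * h t powr \<alpha>) + ennreal c0 * ennreal (g t powr \<beta>)
          = ennreal (g t powr \<beta> * h t powr \<alpha> + c0 * g t powr \<beta>)"
        using c0p by (simp add: ennreal_mult ennreal_plus)
      moreover have "ennreal c1 * ennreal (g t powr \<beta> * h t) = ennreal (c1 * (g t powr \<beta> * h t))"
        using c1p h0'[of t] by (simp add: ennreal_mult)
      ultimately show "ennreal (g t powr \<beta> * h t powr \<alpha>) + ennreal c0 * ennreal (g t powr \<beta>) \<le> ennreal c1 * ennreal (g t powr \<beta> * h t)"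
        by (simp add: ennreal_leI)
    qed
    also have "\<dots> = ennreal c1 * I" using hP' by (subst nn_integral_cmult) measurable
    finally show ?thesis .
  qed
  obtain Ir where Ir: "0 \<le> Ir" "I = ennreal Ir" "Ir \<le> C"
  proof (cases I rule: ennreal_cases)
    case (real r) then show ?thesis using that Ile C0 by (auto simp: ennreal_le_iff)
  qed (use Ile in \<open>simp add: top_unique\<close>)
  have "MomR \<le> MomR + ennreal c0 * I" by simp
  hence "MomR \<le> ennreal c1 * I" using key by (rule order_trans)
  hence "MomR \<le> ennreal (c1 * Ir)" using Ir c1p by (simp add: ennreal_mult)
  hence "MomR \<noteq> \<infinity>" using neq_top_trans[OF ennreal_neq_top] by simp
  then obtain Mr where Mr: "0 \<le> Mr" "MomR = ennreal Mr" by (cases MomR rule: ennreal_cases) auto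
  have "ennreal (Mr + c0 * Ir) = MomR + ennreal c0 * I"
    using Ir Mr c0p by (simp add: ennreal_mult ennreal_plus)
  moreover have "ennreal c1 * I = ennreal (c1 * Ir)" using Ir c1p by (simp add: ennreal_mult)
  ultimately have "ennreal (Mr + c0 * Ir) \<le> ennreal (c1 * Ir)" using key by simp
  hence "Mr + c0 * Ir \<le> c1 * Ir" using c1p Ir by (simp add: ennreal_le_iff)
  hence "Mr \<le> cst e \<alpha> * Ir" unfolding cst_eq left_diff_distrib by linarith
  also have "\<dots> \<le> cst e \<alpha> * C" using Ir cst_pos by (simp add: mult_left_mono)
  finally have fin: "MomR \<le> ennreal (cst e \<alpha> * C)" using Mr by simp
  have e1: "bind P (upd_kernel S A i D) = density (bind Q (upd_kernel S A i D')) (\<lambda>x. ennreal (f' x))"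
    using P'd unfolding P'_def Q'_def K_def L_def .
  have e2: "(\<integral>\<^sup>+ x. ennreal (f' x powr \<alpha>) \<partial>bind Q (upd_kernel S A i D')) \<le> ennreal (cst e \<alpha> * C)"
    using fin momR unfolding MomR_def Q'_def L_def by simp
  show ?thesis using f'm f'0 f'B e1 e2 by blast
qed



lemma cst_nonneg: "0 < e \<Longrightarrow> 0 \<le> cst e \<alpha>"
  unfolding cst_def by (intro divide_nonneg_nonneg add_nonneg_nonneg mult_nonneg_nonneg) auto

lemma tail_pt:
  fixes x t \<alpha> :: real assumes x: "0 \<le> x" and t: "0 < t" and al: "1 < \<alpha>"
  shows "x \<le> t + t powr (1 - \<alpha>) * x powr \<alpha>"
proof (cases "x \<le> t")
  case True
  then show ?thesis by (smt (verit) mult_nonneg_nonneg powr_ge_zero)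
next
  case False
  hence xt: "t < x" by simp
  have "x = x powr \<alpha> * x powr (1 - \<alpha>)" using xt t by (simp add: powr_add[symmetric])
  also have "\<dots> \<le> x powr \<alpha> * t powr (1 - \<alpha>)"
    using powr_mono2'[of "1 - \<alpha>" t x] al t xt by (intro mult_left_mono) auto
  finally have "x \<le> t powr (1 - \<alpha>) * x powr \<alpha>" by (simp add: mult.commute)
  thus ?thesis using t by linarith
qed

theorem mainTheorem8:
  fixes S :: "nat \<Rightarrow> 's measure"
    and A :: "nat \<Rightarrow> (nat \<Rightarrow> 's) \<Rightarrow> 'd list \<Rightarrow> 's measure"
    and n k :: nat and a b \<delta> :: real and eps :: "nat \<Rightarrow> real"
  assumes kernel: "\<And>i D. i < k \<Longrightarrow> length D = n \<Longrightarrow>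
             (\<lambda>s. A i s D) \<in> measurable (PiM {..<i} S) (prob_algebra (S i))"
    and priv: "\<And>i s. i < k \<Longrightarrow> s \<in> space (PiM {..<i} S) \<Longrightarrow>
             dp n (S i) (A i s) (eps i) 0"
    and eps_le: "\<And>i. i < k \<Longrightarrow> eps i \<le> ln (1 + a / (real k - b * real i))"
    and a_pos: "a > 0" and b_pos: "0 < b" and b_lt1: "b < 1"
    and delta_pos: "0 < \<delta>" and delta_lt1: "\<delta> < 1"
  shows "dp n (PiM {..<k} S) (adaptive_comp S A k)
           (a\<^sup>2 / (2 * real k * (1 - b)) + sqrt (2 * a\<^sup>2 * ln (1 / \<delta>) / (real k * (1 - b)))) \<delta>"
  unfolding dp_def
proof (intro allI impI ballI)
  fix D D' :: "'d list" and X
  assume nb: "neighboring n D D'" and X: "X \<in> sets (PiM {..<k} S)"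
  have lD: "length D = n" and lD': "length D' = n" using nb by (auto simp: neighboring_def)
  have nb': "neighboring n D' D"
  proof -
    have "{j. j < n \<and> D' ! j \<noteq> D ! j} = {j. j < n \<and> D ! j \<noteq> D' ! j}" by auto
    thus ?thesis using nb by (simp add: neighboring_def)
  qed
  show "measure (adaptive_comp S A k D) X
        \<le> exp (a\<^sup>2 / (2 * real k * (1 - b)) + sqrt (2 * a\<^sup>2 * ln (1 / \<delta>) / (real k * (1 - b))))
           * measure (adaptive_comp S A k D') X + \<delta>"
  proof (cases "k = 0")
    case True
    then show ?thesis using delta_pos by simp
  next
    case False
    define e where "e j = ln (1 + a / (real k - b * real j))" for j
    have kpos: "real k - b * real j > 0" if "j < k" for j
    proof -
      have "b * real j \<le> b * real k" using that b_pos by (simp add: mult_left_mono)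
      also have "\<dots> < real k" using b_lt1 False by simp
      finally show ?thesis by simp
    qed
    have epos: "0 < e j" if "j < k" for j
    proof -
      have "0 < a / (real k - b * real j)" using kpos[OF that] a_pos by simp
      thus ?thesis unfolding e_def by (intro ln_gt_zero) simp
    qed
    have pv: "measure (A j s E) Y \<le> exp (e j) * measure (A j s E') Y"
      if j: "j < k" and s: "s \<in> space (PiM {..<j} S)" and Y: "Y \<in> sets (S j)" and nE: "neighboring n E E'" for j s Y E E'
    proof -
      have "measure (A j s E) Y \<le> exp (eps j) * measure (A j s E') Y + 0"
        using priv[OF j s] nE Y unfolding dp_def by blast
      also have "\<dots> \<le> exp (e j) * measure (A j s E') Y"
        using eps_le[OF j] by (simp add: e_def mult_right_mono)
      finally show ?thesis .
    qed
    define \<rho> where "\<rho> = a\<^sup>2 / (2 * real k * (1 - b))"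
    define L where "L = ln (1 / \<delta>)"
    define \<alpha> where "\<alpha> = 1 + sqrt (L / \<rho>)"
    have rpos: "0 < \<rho>" using a_pos b_lt1 False by (simp add: \<rho>_def)
    have Lpos: "0 < L" using delta_pos delta_lt1 by (simp add: L_def)
    have al: "1 < \<alpha>" using rpos Lpos by (simp add: \<alpha>_def)
    have kerD: "\<And>j. j < k \<Longrightarrow> (\<lambda>s. A j s D) \<in> PiM {..<j} S \<rightarrow>\<^sub>M prob_algebra (S j)"
      using kernel lD by blast
    have kerD': "\<And>j. j < k \<Longrightarrow> (\<lambda>s. A j s D') \<in> PiM {..<j} S \<rightarrow>\<^sub>M prob_algebra (S j)"
      using kernel lD' by blast
    have ind: "\<exists>f. f \<in> borel_measurable (PiM {..<i} S) \<and> (\<forall>x. 0 \<le> f x) \<and> (\<forall>x. f x \<le> (\<Prod>j<i. exp (e j)))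
       \<and> adaptive_comp S A i D = density (adaptive_comp S A i D') (\<lambda>x. ennreal (f x))
       \<and> (\<integral>\<^sup>+ x. ennreal (f x powr \<alpha>) \<partial>adaptive_comp S A i D') \<le> ennreal (\<Prod>j<i. cst (e j) \<alpha>)"
      if "i \<le> k" for i
      using that
    proof (induction i)
      case 0
      have pr: "prob_space (adaptive_comp S A 0 D')"
        using comp_space[of 0 A D' S] by (simp add: space_prob_algebra)
      have "(\<integral>\<^sup>+ x. ennreal (1 powr \<alpha>) \<partial>adaptive_comp S A 0 D') = 1"
        using prob_space.emeasure_space_1[OF pr] by simp
      moreover have "adaptive_comp S A 0 D = density (adaptive_comp S A 0 D') (\<lambda>x. ennreal 1)"
        using density_1[of "adaptive_comp S A 0 D'"] by simp
      ultimately show ?case by (intro exI[of _ "\<lambda>_. 1"]) auto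
    next
      case (Suc i)
      then obtain f where f: "f \<in> borel_measurable (PiM {..<i} S)" "\<forall>x. 0 \<le> f x" "\<forall>x. f x \<le> (\<Prod>j<i. exp (e j))"
        "adaptive_comp S A i D = density (adaptive_comp S A i D') (\<lambda>x. ennreal (f x))"
        "(\<integral>\<^sup>+ x. ennreal (f x powr \<alpha>) \<partial>adaptive_comp S A i D') \<le> ennreal (\<Prod>j<i. cst (e j) \<alpha>)"
        by auto
      have ik: "i < k" using Suc by simp
      have P: "adaptive_comp S A i D \<in> space (prob_algebra (PiM {..<i} S))"
        by (rule comp_space) (use kerD ik in auto)
      have Q: "adaptive_comp S A i D' \<in> space (prob_algebra (PiM {..<i} S))"
        by (rule comp_space) (use kerD' ik in auto)
      have C0: "0 \<le> (\<Prod>j<i. cst (e j) \<alpha>)"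
        using epos ik by (intro prod_nonneg cst_nonneg) auto
      obtain f' where f': "f' \<in> borel_measurable (PiM {..<Suc i} S)" "\<forall>x. 0 \<le> f' x"
        "\<forall>x. f' x \<le> (\<Prod>j<i. exp (e j)) * exp (e i)"
        "bind (adaptive_comp S A i D) (upd_kernel S A i D) = density (bind (adaptive_comp S A i D') (upd_kernel S A i D')) (\<lambda>x. ennreal (f' x))"
        "(\<integral>\<^sup>+ x. ennreal (f' x powr \<alpha>) \<partial>bind (adaptive_comp S A i D') (upd_kernel S A i D')) \<le> ennreal (cst (e i) \<alpha> * (\<Prod>j<i. cst (e j) \<alpha>))"
        using step[where A=A and S=S and i=i and D=D and D'=D' and e="e i" and \<alpha>=\<alpha> and f=f
            and B="\<Prod>j<i. exp (e j)" and C="\<Prod>j<i. cst (e j) \<alpha>",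
            OF kerD[OF ik] kerD'[OF ik] P Q pv[OF ik _ _ nb] pv[OF ik _ _ nb'] epos[OF ik] al f(1)]
          f(2-5) C0 by blast
      show ?case
        using f' unfolding comp_Suc[symmetric] by (intro exI[of _ f']) (auto simp: mult.commute)
    qed
    obtain f where f: "f \<in> borel_measurable (PiM {..<k} S)" "\<forall>x. 0 \<le> f x"
        "adaptive_comp S A k D = density (adaptive_comp S A k D') (\<lambda>x. ennreal (f x))"
        "(\<integral>\<^sup>+ x. ennreal (f x powr \<alpha>) \<partial>adaptive_comp S A k D') \<le> ennreal (\<Prod>j<k. cst (e j) \<alpha>)"
      using ind[of k] by auto
    define Ck where "Ck = (\<Prod>j<k. cst (e j) \<alpha>)"
    have Ck0: "0 \<le> Ck" unfolding Ck_def using epos by (intro prod_nonneg cst_nonneg) auto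
    have Ck: "Ck \<le> exp (\<alpha> * (\<alpha> - 1) * \<rho>)"
    proof -
      have "Ck \<le> (\<Prod>j<k. exp (\<alpha> * (\<alpha> - 1) * (e j)^2 / 2))"
        unfolding Ck_def
      proof (intro prod_mono conjI cst_nonneg)
        fix j assume "j \<in> {..<k}"
        hence j: "j < k" by simp
        show "0 < e j" using epos[OF j] .
        show "cst (e j) \<alpha> \<le> exp (\<alpha> * (\<alpha> - 1) * (e j)^2 / 2)"
          using chord_bound[OF epos[OF j] less_imp_le[OF al]] unfolding cst_def by simp
      qed
      also have "\<dots> = exp (\<Sum>j<k. \<alpha> * (\<alpha> - 1) * (e j)^2 / 2)" by (simp add: exp_sum)
      also have "(\<Sum>j<k. \<alpha> * (\<alpha> - 1) * (e j)^2 / 2) = \<alpha> * (\<alpha> - 1) / 2 * (\<Sum>j<k. (e j)^2)"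
        by (simp add: sum_distrib_left sum_divide_distrib)
      also have "\<dots> \<le> \<alpha> * (\<alpha> - 1) / 2 * (a^2 / (real k * (1 - b)))"
        using sum_sq_bound[OF a_pos b_pos b_lt1, of k] al by (intro mult_left_mono) (auto simp: e_def)
      also have "\<dots> = \<alpha> * (\<alpha> - 1) * \<rho>" by (simp add: \<rho>_def)
      finally show ?thesis by simp
    qed
    define \<epsilon> where "\<epsilon> = \<rho> + 2 * sqrt (\<rho> * L)"
    define t where "t = exp \<epsilon>"
    have tpos: "0 < t" by (simp add: t_def)
    have eps_eq: "a\<^sup>2 / (2 * real k * (1 - b)) + sqrt (2 * a\<^sup>2 * ln (1 / \<delta>) / (real k * (1 - b))) = \<epsilon>"
    proof -
      have "2 * a\<^sup>2 * ln (1 / \<delta>) / (real k * (1 - b)) = 4 * (\<rho> * L)"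
        using b_lt1 False by (simp add: \<rho>_def L_def field_simps)
      hence "sqrt (2 * a\<^sup>2 * ln (1 / \<delta>) / (real k * (1 - b))) = 2 * sqrt (\<rho> * L)"
        by (simp add: real_sqrt_mult)
      thus ?thesis by (simp add: \<epsilon>_def \<rho>_def)
    qed
    let ?P = "adaptive_comp S A k D" and ?Q = "adaptive_comp S A k D'"
    have Pk: "?P \<in> space (prob_algebra (PiM {..<k} S))" by (rule comp_space) (use kerD in auto)
    have Qk: "?Q \<in> space (prob_algebra (PiM {..<k} S))" by (rule comp_space) (use kerD' in auto)
    interpret PP: prob_space ?P using Pk by (simp add: space_prob_algebra)
    interpret QQ: prob_space ?Q using Qk by (simp add: space_prob_algebra)
    have sQ: "sets ?Q = sets (PiM {..<k} S)" using Qk by (simp add: space_prob_algebra)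
    have fQ[measurable]: "f \<in> borel_measurable ?Q" using f(1) by (simp add: measurable_cong_sets[OF sQ refl])
    have XQ[measurable]: "X \<in> sets ?Q" using X sQ by simp
    have "emeasure ?P X = (\<integral>\<^sup>+ x. ennreal (f x) * indicator X x \<partial>?Q)"
      by (subst f(3)) (rule emeasure_density; measurable)
    also have "\<dots> \<le> (\<integral>\<^sup>+ x. ennreal t * indicator X x + ennreal (t powr (1 - \<alpha>)) * ennreal (f x powr \<alpha>) \<partial>?Q)"
    proof (rule nn_integral_mono)
      fix x
      have "f x \<le> t + t powr (1 - \<alpha>) * f x powr \<alpha>" using tail_pt[OF _ tpos al] f(2) by blast
      hence "ennreal (f x) \<le> ennreal (t + t powr (1 - \<alpha>) * f x powr \<alpha>)" by (rule ennreal_leI)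
      also have "\<dots> = ennreal t + ennreal (t powr (1 - \<alpha>)) * ennreal (f x powr \<alpha>)"
        using tpos by (simp add: ennreal_mult ennreal_plus)
      finally have "ennreal (f x) \<le> ennreal t + ennreal (t powr (1 - \<alpha>)) * ennreal (f x powr \<alpha>)" .
      thus "ennreal (f x) * indicator X x \<le> ennreal t * indicator X x + ennreal (t powr (1 - \<alpha>)) * ennreal (f x powr \<alpha>)"
        by (cases "x \<in> X") auto
    qed
    also have "\<dots> = ennreal t * emeasure ?Q X + ennreal (t powr (1 - \<alpha>)) * (\<integral>\<^sup>+ x. ennreal (f x powr \<alpha>) \<partial>?Q)"
      by (subst nn_integral_add) (auto simp: nn_integral_cmult nn_integral_cmult_indicator)
    also have "\<dots> \<le> ennreal t * emeasure ?Q X + ennreal (t powr (1 - \<alpha>)) * ennreal Ck"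
      using f(4) unfolding Ck_def by (intro add_mono mult_left_mono) auto
    also have "\<dots> = ennreal (t * measure ?Q X + t powr (1 - \<alpha>) * Ck)"
      using tpos Ck0 by (simp add: QQ.emeasure_eq_measure ennreal_mult ennreal_plus)
    finally have m0: "emeasure ?P X \<le> ennreal (t * measure ?Q X + t powr (1 - \<alpha>) * Ck)" .
    have nn: "0 \<le> t * measure ?Q X + t powr (1 - \<alpha>) * Ck" using tpos Ck0 by simp
    have "ennreal (measure ?P X) \<le> ennreal (t * measure ?Q X + t powr (1 - \<alpha>) * Ck)"
      using m0 by (simp only: PP.emeasure_eq_measure)
    hence m1: "measure ?P X \<le> t * measure ?Q X + t powr (1 - \<alpha>) * Ck"
      using ennreal_le_iff[OF nn] by blast
    have "t powr (1 - \<alpha>) * Ck \<le> exp ((1 - \<alpha>) * \<epsilon>) * exp (\<alpha> * (\<alpha> - 1) * \<rho>)"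
      using Ck by (simp add: t_def powr_def mult_left_mono)
    also have "\<dots> = exp (-(\<alpha> - 1) * (\<rho> + 2 * sqrt (\<rho> * L)) + \<alpha> * (\<alpha> - 1) * \<rho>)"
      by (simp add: \<epsilon>_def flip: exp_add)
    also have "\<dots> = exp (-L)" unfolding \<alpha>_def by (rule final_alg[OF rpos Lpos])
    also have "\<dots> = \<delta>" using delta_pos by (simp add: L_def ln_div exp_minus)
    finally have "t powr (1 - \<alpha>) * Ck \<le> \<delta>" .
    then show ?thesis using m1 eps_eq by (simp add: t_def)
  qed
qed


end
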